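(* Let $m=2l-1$ with $l\ge1$, so $\mathfrak g$ is of type $B_l$, and write the noncompact positive roots as the chain $\gamma_1<\gamma_2<\dots<\gamma_{2l-1}$, where $\gamma_k=\phi_1+\dots+\phi_k$ for $1\le k\le l$ and $\gamma_{l+k}=\phi_1+\dots+\phi_{l-k}+2\phi_{l-k+1}+\dots+2\phi_l$ for $1\le k\le l-1$. For $0\le i\le 2l-1$ let $D_i=\{\gamma_1,\dots,\gamma_i\}$ ($D_0=\emptyset$) and for $1\le s\le 2l$ let $U_s=\{\gamma_s,\dots,\gamma_{2l-1}\}$ ($U_{2l}=\emptyset$). Then the pairs $(\Delta(\mathfrak u\cap\mathfrak p_-),\Delta(\mathfrak u\cap\mathfrak p_+))$ arising from $\theta$-stable parabolic subalgebras $\mathfrak q\supseteq\mathfrak h\oplus\sum_{\alpha\in\Delta_{\mathfrak k}^+}\mathfrak g^\alpha$ are exactly the pairs $(-D_i,U_s)$ with either (a) $0\le i\le l-1$ and $s\in\{i+1,i+2,\dots,l\}\cup\{2l-i\}$, or (b) $l\le i\le 2l-1$ and $s\in\{i+1,\dots,2l\}$. In particular there are $l(l+2)$ such pairs.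
   Context: Setting: $G=SO_0(2,m)$, $K\cong SO(2)\times SO(m)$ maximal compact, $\theta$ Cartan involution, $\mathfrak g_0=\mathfrak{so}(2,m)=\mathfrak k_0\oplus\mathfrak p_0$, complexifications $\mathfrak g,\mathfrak k,\mathfrak p$. Let $\mathfrak t_0$ be a maximal abelian subalgebra of $\mathfrak k_0$ (also a Cartan subalgebra of $\mathfrak g_0$), $\mathfrak h=\mathfrak t_0^{\mathbb C}$, $\Delta=\Delta(\mathfrak g,\mathfrak h)$, $\Delta_{\mathfrak k}$ the compact roots (roots of $\mathfrak k$), $\Delta_n=\Delta\setminus\Delta_{\mathfrak k}$. For $m=2l-1$, fix a positive system $\Delta^+$ with simple roots $\phi_1,\dots,\phi_l$ (Dynkin diagram $\phi_1-\phi_2-\cdots-\phi_{l-1}\Rightarrow\phi_l$, $\phi_l$ short) in which $\phi_1$ is the unique noncompact simple root and every noncompact root has $\phi_1$-coefficient $\pm1$; $\Delta_{\mathfrak k}^+=\Delta^+\cap\Delta_{\mathfrak k}$, $\Delta_n^+=\Delta^+\cap\Delta_n$, $\mathfrak p_\pm=\sum_{\alpha\in\pm\Delta_n^+}\mathfrak g^\alpha$. For $l=1$, $\Delta=\{\pm\phi_1\}$ with $\phi_1$ noncompact. A $\theta$-stable parabolic subalgebra is a parabolic subalgebra $\mathfrak q$ of $\mathfrak g$ with $\theta(\mathfrak q)=\mathfrak q$ and $\mathfrak q\cap\bar{\mathfrak q}$ a Levi subalgebra; $\mathfrak u$ denotes its nilradical, and $\Delta(\mathfrak u\cap\mathfrak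 p_\pm)=\{\alpha\in\pm\Delta_n^+:\mathfrak g^\alpha\subseteq\mathfrak u\}$. *)

theory Defs
  imports Main
begin

(* Root system of g = so(2,2l-1)^C (type B_l), realised in the weight lattice
   Z^l; a weight is a function nat => int supported on {1..l}. *)

type_synonym wt = "nat \<Rightarrow> int"

definition ev :: "nat \<Rightarrow> wt" where
  "ev i = (\<lambda>k. if k = i then 1 else 0)"

definition wadd :: "wt \<Rightarrow> wt \<Rightarrow> wt" where
  "wadd a b = (\<lambda>k. a k + b k)"

definition wneg :: "wt \<Rightarrow> wt" where
  "wneg a = (\<lambda>k. - a k)"

definition wsmul :: "int \<Rightarrow> wt \<Rightarrow> wt" where
  "wsmul c a = (\<lambda>k. c * a k)"

definition roots :: "nat \<Rightarrow> wt set" where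
  "roots l =
     {wadd (wsmul s (ev i)) (wsmul t (ev j)) | i j s t.
        1 \<le> i \<and> i < j \<and> j \<le> l \<and> s \<in> {1, -1} \<and> t \<in> {1, -1}}
   \<union> {wsmul s (ev i) | i s. 1 \<le> i \<and> i \<le> l \<and> s \<in> {1, -1}}"

definition phi :: "nat \<Rightarrow> nat \<Rightarrow> wt" where
  "phi l i = (if i < l then wadd (ev i) (wneg (ev (Suc i))) else ev l)"

definition lincomb :: "nat \<Rightarrow> (nat \<Rightarrow> int) \<Rightarrow> wt" where
  "lincomb l c = (\<lambda>k. \<Sum>i=1..l. c i * phi l i k)"

definition pos_roots :: "nat \<Rightarrow> wt set" where
  "pos_roots l = {a \<in> roots l. \<exists>c::nat \<Rightarrow> nat. a = lincomb l (\<lambda>i. int (c i))}"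

(* compact roots: phi_1-coefficient 0 (the phi_1-coefficient of a root a is a 1);
   noncompact roots: the others (phi_1 is the unique noncompact simple root). *)
definition cpt_roots :: "nat \<Rightarrow> wt set" where
  "cpt_roots l = {a \<in> roots l. a 1 = 0}"

definition ncpt_roots :: "nat \<Rightarrow> wt set" where
  "ncpt_roots l = roots l - cpt_roots l"

definition pos_cpt_roots :: "nat \<Rightarrow> wt set" where
  "pos_cpt_roots l = pos_roots l \<inter> cpt_roots l"

definition pos_ncpt_roots :: "nat \<Rightarrow> wt set" where
  "pos_ncpt_roots l = pos_roots l \<inter> ncpt_roots l"

(* A subalgebra q = h + sum_{a in P} g^a is a parabolic subalgebra iff the set P of
   roots is closed and P \<union> -P = Delta.  Since h = t_0^C is contained in k, every
   such q is theta-stable, and q \<inter> conj q = h + sum_{a in P \<inter> -P} g^a is a Levi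
   subalgebra.  So theta-stable parabolic subalgebras q containing
   h + sum_{a in Delta_k^+} g^a correspond to the following sets P. *)
definition theta_parabolic :: "nat \<Rightarrow> wt set \<Rightarrow> bool" where
  "theta_parabolic l P \<longleftrightarrow>
     P \<subseteq> roots l \<and>
     (\<forall>a\<in>P. \<forall>b\<in>P. wadd a b \<in> roots l \<longrightarrow> wadd a b \<in> P) \<and>
     P \<union> wneg ` P = roots l \<and>
     pos_cpt_roots l \<subseteq> P"

definition nil_roots :: "nat \<Rightarrow> wt set \<Rightarrow> wt set" where
  "nil_roots l P = {a \<in> P. wneg a \<notin> P}"

definition u_plus :: "nat \<Rightarrow> wt set \<Rightarrow> wt set" where
  "u_plus l P = nil_roots l P \<inter> pos_ncpt_roots l"

definition u_minus :: "nat \<Rightarrow> wt set \<Rightarrow> wt set" where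
  "u_minus l P = nil_roots l P \<inter> wneg ` pos_ncpt_roots l"

definition gamma :: "nat \<Rightarrow> nat \<Rightarrow> wt" where
  "gamma l k = lincomb l (\<lambda>i. if k \<le> l then (if i \<le> k then 1 else 0)
                                 else (if i \<le> 2*l - k then 1 else 2))"

definition Dset :: "nat \<Rightarrow> nat \<Rightarrow> wt set" where
  "Dset l i = gamma l ` {1..i}"

definition Uset :: "nat \<Rightarrow> nat \<Rightarrow> wt set" where
  "Uset l s = gamma l ` {s..2*l-1}"

end

theory Submission
  imports Defs
begin


lemma lincomb_eval:
  "lincomb l c x = (if 1 \<le> x \<and> x \<le> l then c x - (if 2 \<le> x then c (x-1) else 0) else 0)"
proof -
  have "lincomb l c x = (\<Sum>i=1..l. (if x = i then c i else 0) - (if i = x - 1 \<and> 2 \<le> x \<and> x \<le> l then c i else 0))"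
    unfolding lincomb_def phi_def ev_def wadd_def wneg_def
    by (rule sum.cong) auto
  also have "\<dots> = (\<Sum>i=1..l. (if x = i then c i else 0)) - (\<Sum>i=1..l. (if i = x - 1 \<and> 2 \<le> x \<and> x \<le> l then c i else 0))"
    by (rule sum_subtractf)
  also have "\<dots> = (if 1 \<le> x \<and> x \<le> l then c x - (if 2 \<le> x then c (x-1) else 0) else 0)"
    apply (auto simp: sum.If_cases)
    apply (subgoal_tac "{Suc 0..l} \<inter> {x - Suc 0} = {x - Suc 0}")
    by auto
  finally show ?thesis .
qed

definition gm :: "nat \<Rightarrow> nat \<Rightarrow> wt" where
  "gm l k = (if k < l then wadd (ev 1) (wneg (ev (k+1))) else if k = l then ev 1
             else wadd (ev 1) (ev (2*l-k+1)))"

lemma gamma_eq: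
  assumes "1 \<le> k" "k \<le> 2*l-1"
  shows "gamma l k = gm l k"
proof (rule ext)
  fix x
  show "gamma l k x = gm l k x"
    using assms unfolding gamma_def lincomb_eval gm_def ev_def wadd_def wneg_def
    by auto
qed

lemma phi_lincomb:
  assumes "1 \<le> j" "j \<le> l"
  shows "lincomb l (\<lambda>i. if i = j then 1 else 0) = phi l j"
proof (rule ext)
  fix x
  show "lincomb l (\<lambda>i. if i = j then 1 else 0) x = phi l j x"
    using assms unfolding lincomb_eval phi_def ev_def wadd_def wneg_def
    by auto
qed

definition dot :: "nat \<Rightarrow> wt \<Rightarrow> wt \<Rightarrow> int" where
  "dot l lam a = (\<Sum>x=1..l. lam x * a x)"

lemma dot_wadd: "dot l lam (wadd a b) = dot l lam a + dot l lam b"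
  unfolding dot_def wadd_def by (simp add: distrib_left sum.distrib)

lemma dot_wneg: "dot l lam (wneg a) = - dot l lam a"
  unfolding dot_def wneg_def by (simp add: sum_negf)

lemma dot_wsmul: "dot l lam (wsmul c a) = c * dot l lam a"
  unfolding dot_def wsmul_def by (simp add: sum_distrib_left algebra_simps)

lemma dot_ev: "1 \<le> i \<Longrightarrow> i \<le> l \<Longrightarrow> dot l lam (ev i) = lam i"
proof -
  assume "1 \<le> i" "i \<le> l"
  have "dot l lam (ev i) = (\<Sum>x=1..l. if x = i then lam x else 0)"
    unfolding dot_def ev_def by (rule sum.cong) auto
  then show ?thesis using \<open>1 \<le> i\<close> \<open>i \<le> l\<close> by simp
qed

lemma wneg_wneg[simp]: "wneg (wneg a) = a"
  unfolding wneg_def by simp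

lemma roots_wneg: "a \<in> roots l \<Longrightarrow> wneg a \<in> roots l"
proof -
  assume "a \<in> roots l"
  then consider (A) i j s t where "1 \<le> i" "i < j" "j \<le> l" "s \<in> {1,-1}" "t \<in> {1,-1}"
      "a = wadd (wsmul s (ev i)) (wsmul t (ev j))"
    | (B) i s where "1 \<le> i" "i \<le> l" "s \<in> {1,-1}" "a = wsmul s (ev i)"
    unfolding roots_def by blast
  then show ?thesis
  proof cases
    case A
    then have "wneg a = wadd (wsmul (-s) (ev i)) (wsmul (-t) (ev j))"
      unfolding wneg_def wadd_def wsmul_def by auto
    moreover have "-s \<in> {1,-1}" "-t \<in> {1,-1}" using A by auto
    ultimately show ?thesis using A(1-3) unfolding roots_def by blast
  next
    case B
    then have "wneg a = wsmul (-s) (ev i)"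
      unfolding wneg_def wadd_def wsmul_def by auto
    moreover have "-s \<in> {1,-1}" using B by auto
    ultimately show ?thesis using B(1-2) unfolding roots_def by blast
  qed
qed

lemmas wdefs = ev_def wadd_def wneg_def wsmul_def

lemma gamma_root:
  assumes "1 \<le> k" "k \<le> 2*l-1"
  shows "gamma l k \<in> roots l"
proof -
  consider "k < l" | "k = l" | "l < k" by linarith
  then show ?thesis
  proof cases
    case 1
    then have "gamma l k = wadd (wsmul 1 (ev 1)) (wsmul (-1) (ev (k+1)))"
      using assms unfolding gamma_eq[OF assms] gm_def by (intro ext) (auto simp: wdefs)
    moreover have "(1::int) \<in> {1,-1}" "(-1::int) \<in> {1,-1}" by auto
    ultimately show ?thesis using 1 assms unfolding roots_def
      by fastforce
  next
    case 2
    then have "gamma l k = wsmul 1 (ev 1)"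
      using assms unfolding gamma_eq[OF assms] gm_def by (intro ext) (auto simp: wdefs)
    moreover have "(1::int) \<in> {1,-1}" by auto
    ultimately show ?thesis using 2 assms unfolding roots_def by blast
  next
    case 3
    then have "gamma l k = wadd (wsmul 1 (ev 1)) (wsmul 1 (ev (2*l-k+1)))"
      using assms unfolding gamma_eq[OF assms] gm_def by (intro ext) (auto simp: wdefs)
    moreover have "(1::int) \<in> {1,-1}" by auto
    moreover have "1 < 2*l-k+1" "2*l-k+1 \<le> l" using 3 assms by auto
    ultimately show ?thesis using 3 assms unfolding roots_def by blast
  qed
qed

lemma gamma_pos: "gamma l k \<in> pos_roots l \<longleftrightarrow> gamma l k \<in> roots l"
proof -
  have "gamma l k = lincomb l (\<lambda>i. int (if k \<le> l then (if i \<le> k then 1 else 0)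
                                 else (if i \<le> 2*l - k then 1 else 2)))"
    unfolding gamma_def by (rule arg_cong[where f="lincomb l"]) auto
  then have "\<exists>c::nat\<Rightarrow>nat. gamma l k = lincomb l (\<lambda>i. int (c i))" by (rule exI[where x="\<lambda>i. if k \<le> l then (if i \<le> k then 1 else 0)
                                 else (if i \<le> 2*l - k then 1 else 2)"])
  then show ?thesis unfolding pos_roots_def by auto
qed

lemma gamma_1: "1 \<le> k \<Longrightarrow> k \<le> 2*l-1 \<Longrightarrow> gamma l k 1 = 1"
  by (simp add: gamma_eq gm_def wdefs)



lemma pos_ncpt_eq:
  assumes "1 \<le> l"
  shows "pos_ncpt_roots l = gamma l ` {1..2*l-1}"
proof
  show "gamma l ` {1..2*l-1} \<subseteq> pos_ncpt_roots l"
  proof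
    fix a assume "a \<in> gamma l ` {1..2*l-1}"
    then obtain k where k: "1 \<le> k" "k \<le> 2*l-1" "a = gamma l k" by auto
    then show "a \<in> pos_ncpt_roots l"
      using gamma_root[OF k(1,2)] gamma_pos[of l k] gamma_1[OF k(1,2)]
      unfolding pos_ncpt_roots_def ncpt_roots_def cpt_roots_def pos_cpt_roots_def by simp
  qed
next
  show "pos_ncpt_roots l \<subseteq> gamma l ` {1..2*l-1}"
  proof
    fix a assume a: "a \<in> pos_ncpt_roots l"
    then have ar: "a \<in> roots l" and a1: "a 1 \<noteq> 0" and ap: "a \<in> pos_roots l"
      unfolding pos_ncpt_roots_def ncpt_roots_def cpt_roots_def by auto
    from ap obtain c :: "nat \<Rightarrow> nat" where "a = lincomb l (\<lambda>i. int (c i))"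
      unfolding pos_roots_def by blast
    then have "a 1 = int (c 1)" using assms by (simp add: lincomb_eval)
    then have a1p: "a 1 > 0" using a1 by simp
    from ar consider (A) i j s t where "1 \<le> i" "i < j" "j \<le> l" "s \<in> {1,-1}" "t \<in> {1,-1}"
      "a = wadd (wsmul s (ev i)) (wsmul t (ev j))"
    | (B) i s where "1 \<le> i" "i \<le> l" "s \<in> {1,-1}" "a = wsmul s (ev i)"
      unfolding roots_def by blast
    then show "a \<in> gamma l ` {1..2*l-1}"
    proof cases
      case A
      have "a 1 = (if i = 1 then s else 0)" using A by (simp add: wdefs)
      then have i1: "i = 1" and s1: "s = 1" using a1p A(4) by (auto split: if_splits)
      show ?thesis
      proof (cases "t = 1")
        case True
        have k: "1 \<le> 2*l-j+1" "2*l-j+1 \<le> 2*l-1" "\<not> 2*l-j+1 < l" "2*l-j+1 \<noteq> l"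
           "2*l - (2*l-j+1) + 1 = j"
          using A i1 by auto
        have "a = gamma l (2*l-j+1)"
          unfolding gamma_eq[OF k(1,2)] gm_def using k A i1 s1 True by (intro ext) (simp add: wdefs)
        then show ?thesis using k by (metis atLeastAtMost_iff image_eqI)
      next
        case False
        then have t: "t = -1" using A by auto
        have k: "1 \<le> j-1" "j-1 \<le> 2*l-1" "j-1 < l" "j - 1 + 1 = j"
          using A i1 by auto
        have "a = gamma l (j-1)"
          unfolding gamma_eq[OF k(1,2)] gm_def using k A i1 s1 t by (intro ext) (auto simp: wdefs)
        then show ?thesis using k by (metis atLeastAtMost_iff image_eqI)
      qed
    next
      case B
      have "a 1 = (if i = 1 then s else 0)" using B by (simp add: wdefs)
      then have i1: "i = 1" and s1: "s = 1" using a1p B(3) by (auto split: if_splits)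
      have k: "1 \<le> l" "l \<le> 2*l-1" using assms by auto
      have "a = gamma l l"
        unfolding gamma_eq[OF k] gm_def using B i1 s1 by (intro ext) (auto simp: wdefs)
      then show ?thesis using k by (metis atLeastAtMost_iff image_eqI)
    qed
  qed
qed



lemma lincomb_psum:
  "1 \<le> k \<Longrightarrow> k \<le> l \<Longrightarrow> (\<Sum>x=1..k. lincomb l c x) = c k"
proof (induction k)
  case 0 then show ?case by simp
next
  case (Suc k)
  show ?case
  proof (cases "k = 0")
    case True then show ?thesis using Suc by (simp add: lincomb_eval)
  next
    case False
    then have "(\<Sum>x=1..Suc k. lincomb l c x) = (\<Sum>x=1..k. lincomb l c x) + lincomb l c (Suc k)"
      by simp
    also have "\<dots> = c k + lincomb l c (Suc k)" using Suc False by simp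
    also have "\<dots> = c (Suc k)" using Suc False by (simp add: lincomb_eval)
    finally show ?thesis .
  qed
qed

lemma psum_pos:
  assumes "a \<in> pos_roots l" "1 \<le> k" "k \<le> l"
  shows "(\<Sum>x=1..k. a x) \<ge> 0"
proof -
  from assms(1) obtain c :: "nat \<Rightarrow> nat" where "a = lincomb l (\<lambda>i. int (c i))"
    unfolding pos_roots_def by blast
  then show ?thesis using lincomb_psum[OF assms(2,3)] by simp
qed

lemma psum_ev: "1 \<le> i \<Longrightarrow> i < j \<Longrightarrow> (\<Sum>x=1..i. wadd (wsmul s (ev i)) (wsmul t (ev j)) x) = s"
proof -
  assume "1 \<le> i" "i < j"
  have "(\<Sum>x=1..i. wadd (wsmul s (ev i)) (wsmul t (ev j)) x) = (\<Sum>x=1..i. (if x = i then s else 0))"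
    unfolding wdefs using \<open>i < j\<close> by (intro sum.cong) auto
  then show ?thesis using \<open>1 \<le> i\<close> by simp
qed

lemma psum_ev1: "1 \<le> i \<Longrightarrow> (\<Sum>x=1..i. wsmul s (ev i) x) = s"
proof -
  assume "1 \<le> i"
  have "(\<Sum>x=1..i. wsmul s (ev i) x) = (\<Sum>x=1..i. (if x = i then s else 0))"
    unfolding wdefs by (rule sum.cong) auto
  then show ?thesis using \<open>1 \<le> i\<close> by simp
qed

definition Plam :: "nat \<Rightarrow> wt \<Rightarrow> wt set" where
  "Plam l lam = {a \<in> roots l. dot l lam a \<ge> 0}"

lemma Plam_parabolic:
  assumes mono: "\<And>x y. 2 \<le> x \<Longrightarrow> x \<le> y \<Longrightarrow> y \<le> l \<Longrightarrow> lam y \<le> lam x"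
    and nonneg: "\<And>x. 2 \<le> x \<Longrightarrow> x \<le> l \<Longrightarrow> 0 \<le> lam x"
  shows "theta_parabolic l (Plam l lam)"
  unfolding theta_parabolic_def
proof (intro conjI)
  show "Plam l lam \<subseteq> roots l" unfolding Plam_def by auto
  show "\<forall>a\<in>Plam l lam. \<forall>b\<in>Plam l lam. wadd a b \<in> roots l \<longrightarrow> wadd a b \<in> Plam l lam"
    unfolding Plam_def by (auto simp: dot_wadd)
  show "Plam l lam \<union> wneg ` Plam l lam = roots l"
  proof
    show "Plam l lam \<union> wneg ` Plam l lam \<subseteq> roots l"
      unfolding Plam_def using roots_wneg by auto
    show "roots l \<subseteq> Plam l lam \<union> wneg ` Plam l lam"
    proof
      fix a assume a: "a \<in> roots l"
      show "a \<in> Plam l lam \<union> wneg ` Plam l lam"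
      proof (cases "dot l lam a \<ge> 0")
        case True then show ?thesis using a unfolding Plam_def by auto
      next
        case False
        then have "wneg a \<in> Plam l lam" using a roots_wneg unfolding Plam_def by (auto simp: dot_wneg)
        then have "wneg (wneg a) \<in> wneg ` Plam l lam" by blast
        then show ?thesis by simp
      qed
    qed
  qed
  show "pos_cpt_roots l \<subseteq> Plam l lam"
  proof
    fix a assume a: "a \<in> pos_cpt_roots l"
    then have ar: "a \<in> roots l" and a1: "a 1 = 0" and ap: "a \<in> pos_roots l"
      unfolding pos_cpt_roots_def cpt_roots_def by auto
    from ar consider (A) i j s t where "1 \<le> i" "i < j" "j \<le> l" "s \<in> {1,-1}" "t \<in> {1,-1}"
      "a = wadd (wsmul s (ev i)) (wsmul t (ev j))"
    | (B) i s where "1 \<le> i" "i \<le> l" "s \<in> {1,-1}" "a = wsmul s (ev i)"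
      unfolding roots_def by blast
    then show "a \<in> Plam l lam"
    proof cases
      case A
      have "a 1 = (if i = 1 then s else 0)" using A by (simp add: wdefs)
      then have i2: "2 \<le> i" using a1 A by (auto split: if_splits)
      have "(\<Sum>x=1..i. a x) \<ge> 0" using psum_pos[OF ap, of i] A by simp
      then have s1: "s = 1" using A psum_ev[of i j s t] by auto
      have "dot l lam a = s * lam i + t * lam j"
        using A by (simp add: dot_wadd dot_wsmul dot_ev)
      also have "\<dots> \<ge> 0" using s1 A(5) mono[OF i2, of j] nonneg[of i] nonneg[of j] A i2 by auto
      finally show ?thesis using ar unfolding Plam_def by simp
    next
      case B
      have "a 1 = (if i = 1 then s else 0)" using B by (simp add: wdefs)
      then have i2: "2 \<le> i" using a1 B by (auto split: if_splits)
      have "(\<Sum>x=1..i. a x) \<ge> 0" using psum_pos[OF ap, of i] B by simp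
      then have s1: "s = 1" using B psum_ev1[of i s] by auto
      have "dot l lam a = s * lam i"
        using B by (simp add: dot_wadd dot_wsmul dot_ev)
      also have "\<dots> \<ge> 0" using s1 nonneg[of i] B i2 by auto
      finally show ?thesis using ar unfolding Plam_def by simp
    qed
  qed
qed



lemma dot_gamma:
  assumes "1 \<le> k" "k \<le> 2*l-1"
  shows "dot l lam (gamma l k) = (if k < l then lam 1 - lam (k+1) else if k = l then lam 1
                                  else lam 1 + lam (2*l-k+1))"
  using assms unfolding gamma_eq[OF assms] gm_def
  by (auto simp: dot_wadd dot_wneg dot_ev)

lemma nil_Plam: "nil_roots l (Plam l lam) = {a \<in> roots l. dot l lam a > 0}"
  unfolding nil_roots_def Plam_def using roots_wneg by (auto simp: dot_wneg)

lemma u_plus_Plam: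
  assumes "1 \<le> l"
  shows "u_plus l (Plam l lam) = gamma l ` {k\<in>{1..2*l-1}. 0 < dot l lam (gamma l k)}"
  unfolding u_plus_def nil_Plam pos_ncpt_eq[OF assms] using gamma_root by auto

lemma u_minus_Plam:
  assumes "1 \<le> l"
  shows "u_minus l (Plam l lam) = wneg ` gamma l ` {k\<in>{1..2*l-1}. dot l lam (gamma l k) < 0}"
  unfolding u_minus_def nil_Plam pos_ncpt_eq[OF assms] using gamma_root roots_wneg
  by (auto simp: dot_wneg)

lemma suff:
  assumes "1 \<le> l"
    and mono: "\<And>x y. 2 \<le> x \<Longrightarrow> x \<le> y \<Longrightarrow> y \<le> l \<Longrightarrow> lam y \<le> lam x"
    and nonneg: "\<And>x. 2 \<le> x \<Longrightarrow> x \<le> l \<Longrightarrow> 0 \<le> lam x"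
    and U: "{k\<in>{1..2*l-1}. 0 < dot l lam (gamma l k)} = {s..2*l-1}"
    and D: "{k\<in>{1..2*l-1}. dot l lam (gamma l k) < 0} = {1..i}"
  shows "(wneg ` Dset l i, Uset l s) \<in> {(u_minus l P, u_plus l P) | P. theta_parabolic l P}"
proof -
  have "theta_parabolic l (Plam l lam)" by (rule Plam_parabolic[OF mono nonneg])
  moreover have "u_minus l (Plam l lam) = wneg ` Dset l i"
    unfolding u_minus_Plam[OF assms(1)] D Dset_def ..
  moreover have "u_plus l (Plam l lam) = Uset l s"
    unfolding u_plus_Plam[OF assms(1)] U Uset_def ..
  ultimately show ?thesis by blast
qed



lemma suff':
  assumes "1 \<le> l"
    and mono: "\<And>x y. 2 \<le> x \<Longrightarrow> x \<le> y \<Longrightarrow> y \<le> l \<Longrightarrow> lam y \<le> lam x"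
    and nonneg: "\<And>x. 2 \<le> x \<Longrightarrow> x \<le> l \<Longrightarrow> 0 \<le> lam x"
    and U: "\<And>k. 1 \<le> k \<Longrightarrow> k \<le> 2*l-1 \<Longrightarrow> (0 < dot l lam (gamma l k) \<longleftrightarrow> s \<le> k)"
    and D: "\<And>k. 1 \<le> k \<Longrightarrow> k \<le> 2*l-1 \<Longrightarrow> (dot l lam (gamma l k) < 0 \<longleftrightarrow> k \<le> i)"
    and "1 \<le> s" "i \<le> 2*l-1"
  shows "(wneg ` Dset l i, Uset l s) \<in> {(u_minus l P, u_plus l P) | P. theta_parabolic l P}"
proof (rule suff[OF assms(1) mono nonneg])
  show "{k\<in>{1..2*l-1}. 0 < dot l lam (gamma l k)} = {s..2*l-1}"
    using U \<open>1 \<le> s\<close> by auto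
  show "{k\<in>{1..2*l-1}. dot l lam (gamma l k) < 0} = {1..i}"
    using D \<open>i \<le> 2*l-1\<close> by auto
qed

lemma caseA1:
  assumes "1 \<le> l" "i \<le> l-1" "i+1 \<le> s" "s \<le> l"
  shows "(wneg ` Dset l i, Uset l s) \<in> {(u_minus l P, u_plus l P) | P. theta_parabolic l P}"
proof (rule suff'[OF assms(1), where lam="\<lambda>x. if x = 1 then 2 else if x \<le> i+1 then 3 else if x \<le> s then 2 else 0"])
  fix k assume k: "1 \<le> k" "k \<le> 2*l-1"
  show "(0 < dot l (\<lambda>x. if x = 1 then 2 else if x \<le> i+1 then 3 else if x \<le> s then 2 else 0) (gamma l k)) = (s \<le> k)"
    unfolding dot_gamma[OF k] using k assms by auto
  show "(dot l (\<lambda>x. if x = 1 then 2 else if x \<le> i+1 then 3 else if x \<le> s then 2 else 0) (gamma l k) < 0) = (k \<le> i)"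
    unfolding dot_gamma[OF k] using k assms by auto
qed (use assms in auto)

lemma caseA2:
  assumes "1 \<le> l" "i \<le> l-1" "s = 2*l-i"
  shows "(wneg ` Dset l i, Uset l s) \<in> {(u_minus l P, u_plus l P) | P. theta_parabolic l P}"
proof (rule suff'[OF assms(1), where lam="\<lambda>x. if x = 1 then 0 else if x \<le> i+1 then 1 else 0"])
  fix k assume k: "1 \<le> k" "k \<le> 2*l-1"
  show "(0 < dot l (\<lambda>x. if x = 1 then 0 else if x \<le> i+1 then 1 else 0) (gamma l k)) = (s \<le> k)"
    unfolding dot_gamma[OF k] using k assms by auto
  show "(dot l (\<lambda>x. if x = 1 then 0 else if x \<le> i+1 then 1 else 0) (gamma l k) < 0) = (k \<le> i)"
    unfolding dot_gamma[OF k] using k assms by auto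
qed (use assms in auto)

lemma caseB:
  assumes "1 \<le> l" "l \<le> i" "i+1 \<le> s" "s \<le> 2*l"
  shows "(wneg ` Dset l i, Uset l s) \<in> {(u_minus l P, u_plus l P) | P. theta_parabolic l P}"
proof (rule suff'[OF assms(1), where lam="\<lambda>x. if x = 1 then -2 else if x \<le> 2*l-s+1 then 3 else if x \<le> 2*l-i then 2 else 0"])
  fix k assume k: "1 \<le> k" "k \<le> 2*l-1"
  show "(0 < dot l (\<lambda>x. if x = 1 then -2 else if x \<le> 2*l-s+1 then 3 else if x \<le> 2*l-i then 2 else 0) (gamma l k)) = (s \<le> k)"
    unfolding dot_gamma[OF k] using k assms by auto
  show "(dot l (\<lambda>x. if x = 1 then -2 else if x \<le> 2*l-s+1 then 3 else if x \<le> 2*l-i then 2 else 0) (gamma l k) < 0) = (k \<le> i)"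
    unfolding dot_gamma[OF k] using k assms by auto
qed (use assms in auto)



lemma phi_pos_cpt:
  assumes "2 \<le> j" "j \<le> l"
  shows "phi l j \<in> pos_cpt_roots l"
proof -
  have r: "phi l j \<in> roots l"
  proof (cases "j < l")
    case True
    then have "phi l j = wadd (wsmul 1 (ev j)) (wsmul (-1) (ev (j+1)))"
      unfolding phi_def by (intro ext) (simp add: wdefs)
    moreover have "(1::int) \<in> {1,-1}" "(-1::int) \<in> {1,-1}" "1 \<le> j" "j < j+1" "j+1 \<le> l"
      using assms True by auto
    ultimately show ?thesis unfolding roots_def by blast
  next
    case False
    then have "phi l j = wsmul 1 (ev j)" "j = l"
      unfolding phi_def using assms by (auto intro!: ext simp: wdefs)
    moreover have "(1::int) \<in> {1,-1}" "1 \<le> j" using assms by auto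
    ultimately show ?thesis unfolding roots_def by blast
  qed
  have "phi l j = lincomb l (\<lambda>i. int (if i = j then 1 else 0))"
  proof -
    have e: "(\<lambda>i::nat. int (if i = j then 1 else 0)) = (\<lambda>i. if i = j then 1 else 0)"
      by (rule ext) simp
    show ?thesis unfolding e using phi_lincomb[of j l] assms by simp
  qed
  then have p: "phi l j \<in> pos_roots l" using r unfolding pos_roots_def
    by (intro CollectI conjI exI[where x="\<lambda>i. if i = j then 1 else 0"]) auto
  have "phi l j 1 = 0" using assms unfolding phi_def by (simp add: wdefs)
  then show ?thesis using r p unfolding pos_cpt_roots_def cpt_roots_def by simp
qed

lemma gamma_step:
  assumes "1 \<le> k" "k+1 \<le> 2*l-1"
  defines "j \<equiv> (if k < l then k+1 else 2*l-k)"
  shows "wadd (gamma l k) (phi l j) = gamma l (k+1)"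
    "wadd (wneg (gamma l (k+1))) (phi l j) = wneg (gamma l k)"
    "2 \<le> j" "j \<le> l"
proof -
  have k1: "1 \<le> k+1" "k \<le> 2*l-1" using assms by auto
  show "wadd (gamma l k) (phi l j) = gamma l (k+1)"
    unfolding gamma_eq[OF assms(1) k1(2)] gamma_eq[OF k1(1) assms(2)] gm_def phi_def j_def
    using assms by (intro ext) (auto simp: wdefs)
  show "wadd (wneg (gamma l (k+1))) (phi l j) = wneg (gamma l k)"
    unfolding gamma_eq[OF assms(1) k1(2)] gamma_eq[OF k1(1) assms(2)] gm_def phi_def j_def
    using assms by (intro ext) (auto simp: wdefs)
  show "2 \<le> j" "j \<le> l" using assms unfolding j_def by auto
qed



lemma sym_facts:
  assumes "1 \<le> k" "k \<le> l-1"
  shows "wadd (gamma l k) (wneg (gamma l l)) = wneg (ev (k+1))"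
    "wadd (wneg (gamma l l)) (wneg (ev (k+1))) = wneg (gamma l (2*l-k))"
    "wadd (wneg (gamma l (2*l-k))) (gamma l l) = wneg (ev (k+1))"
    "wadd (gamma l l) (wneg (ev (k+1))) = gamma l k"
    "wneg (ev (k+1)) \<in> roots l"
proof -
  have b: "1 \<le> k" "k \<le> 2*l-1" "1 \<le> l" "l \<le> 2*l-1" "1 \<le> 2*l-k" "2*l-k \<le> 2*l-1"
    using assms by auto
  note ge = gamma_eq[OF b(1,2)] gamma_eq[OF b(3,4)] gamma_eq[OF b(5,6)]
  show "wadd (gamma l k) (wneg (gamma l l)) = wneg (ev (k+1))"
    unfolding ge gm_def using assms by (intro ext) (auto simp: wdefs)
  show "wadd (wneg (gamma l l)) (wneg (ev (k+1))) = wneg (gamma l (2*l-k))"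
    unfolding ge gm_def using assms by (intro ext) (auto simp: wdefs)
  show "wadd (wneg (gamma l (2*l-k))) (gamma l l) = wneg (ev (k+1))"
    unfolding ge gm_def using assms by (intro ext) (auto simp: wdefs)
  show "wadd (gamma l l) (wneg (ev (k+1))) = gamma l k"
    unfolding ge gm_def using assms by (intro ext) (auto simp: wdefs)
  have "wneg (ev (k+1)) = wsmul (-1) (ev (k+1))" by (intro ext) (simp add: wdefs)
  moreover have "(-1::int) \<in> {1,-1}" "1 \<le> k+1" "k+1 \<le> l" using assms by auto
  ultimately show "wneg (ev (k+1)) \<in> roots l" unfolding roots_def by blast
qed

lemma necc:
  assumes l1: "1 \<le> l" and P: "theta_parabolic l P"
  shows "\<exists>i s. (u_minus l P, u_plus l P) = (wneg ` Dset l i, Uset l s) \<and>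
              ((i \<le> l - 1 \<and> s \<in> {i+1..l} \<union> {2*l - i}) \<or>
              (l \<le> i \<and> i \<le> 2*l - 1 \<and> s \<in> {i+1..2*l}))"
proof -
  have Pr: "P \<subseteq> roots l" and Pc: "\<And>a b. a \<in> P \<Longrightarrow> b \<in> P \<Longrightarrow> wadd a b \<in> roots l \<Longrightarrow> wadd a b \<in> P"
    and Pu: "P \<union> wneg ` P = roots l" and Pk: "pos_cpt_roots l \<subseteq> P"
    using P unfolding theta_parabolic_def by auto
  define f where "f k \<longleftrightarrow> gamma l k \<in> P" for k
  define g where "g k \<longleftrightarrow> wneg (gamma l k) \<in> P" for k
  have F1: "f k \<or> g k" if "1 \<le> k" "k \<le> 2*l-1" for k
  proof -
    have "gamma l k \<in> P \<union> wneg ` P" using Pu gamma_root[OF that] by simp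
    then show ?thesis unfolding f_def g_def by auto
  qed
  have F2: "f (k+1)" if "1 \<le> k" "k+1 \<le> 2*l-1" "f k" for k
  proof -
    note st = gamma_step[OF that(1,2)]
    have ph: "phi l (if k < l then k+1 else 2*l-k) \<in> P" using phi_pos_cpt[OF st(3,4)] Pk by auto
    have r: "gamma l (k+1) \<in> roots l" using gamma_root that by simp
    have "wadd (gamma l k) (phi l (if k < l then k+1 else 2*l-k)) \<in> P"
      by (rule Pc[OF that(3)[unfolded f_def] ph]) (use r st(1) in simp)
    then show ?thesis unfolding f_def st(1) .
  qed
  have F3: "g k" if "1 \<le> k" "k+1 \<le> 2*l-1" "g (k+1)" for k
  proof -
    note st = gamma_step[OF that(1,2)]
    have ph: "phi l (if k < l then k+1 else 2*l-k) \<in> P" using phi_pos_cpt[OF st(3,4)] Pk by auto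
    have r: "wneg (gamma l k) \<in> roots l" using roots_wneg gamma_root that by simp
    have "wadd (wneg (gamma l (k+1))) (phi l (if k < l then k+1 else 2*l-k)) \<in> P"
      by (rule Pc[OF that(3)[unfolded g_def] ph]) (use r st(2) in simp)
    then show ?thesis unfolding g_def st(2) .
  qed
  have F4: "f k \<longleftrightarrow> g (2*l-k)" if "f l" "g l" "1 \<le> k" "k \<le> l-1" for k
  proof
    note sf = sym_facts[OF that(3,4)]
    have b: "1 \<le> k" "k \<le> 2*l-1" "1 \<le> 2*l-k" "2*l-k \<le> 2*l-1" using that by auto
    assume "f k"
    then have "wneg (ev (k+1)) \<in> P" using Pc[of "gamma l k" "wneg (gamma l l)"] sf that
      unfolding f_def g_def by auto
    then show "g (2*l-k)" using Pc[of "wneg (gamma l l)" "wneg (ev (k+1))"] sf that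
        roots_wneg[OF gamma_root[OF b(3,4)]]
      unfolding f_def g_def by auto
  next
    note sf = sym_facts[OF that(3,4)]
    have b: "1 \<le> k" "k \<le> 2*l-1" "1 \<le> 2*l-k" "2*l-k \<le> 2*l-1" using that by auto
    assume "g (2*l-k)"
    then have "wneg (ev (k+1)) \<in> P" using Pc[of "wneg (gamma l (2*l-k))" "gamma l l"] sf that
      unfolding f_def g_def by auto
    then show "f k" using Pc[of "gamma l l" "wneg (ev (k+1))"] sf that gamma_root[OF b(1,2)]
      unfolding f_def g_def by auto
  qed
  have fm: "f k \<Longrightarrow> 1 \<le> k \<Longrightarrow> k \<le> k' \<Longrightarrow> k' \<le> 2*l-1 \<Longrightarrow> f k'" for k k'
  proof (induction k')
    case 0 then show ?case by simp
  next
    case (Suc k')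
    show ?case
    proof (cases "k = Suc k'")
      case True then show ?thesis using Suc by simp
    next
      case False
      then have "f k'" using Suc by auto
      then show ?thesis using F2[of k'] Suc False by auto
    qed
  qed
  have gm: "g k' \<Longrightarrow> 1 \<le> k \<Longrightarrow> k \<le> k' \<Longrightarrow> k' \<le> 2*l-1 \<Longrightarrow> g k" for k k'
  proof (induction k')
    case 0 then show ?case by simp
  next
    case (Suc k')
    show ?case
    proof (cases "k = Suc k'")
      case True then show ?thesis using Suc by simp
    next
      case False
      then have "g k'" using F3[of k'] Suc by auto
      then show ?thesis using Suc False by auto
    qed
  qed
  define S where "S = {k\<in>{1..2*l-1}. \<not> f k}"
  define T where "T = {k\<in>{1..2*l-1}. \<not> g k}"
  define i where "i = (if S = {} then 0 else Max S)"
  define s where "s = (if T = {} then 2*l else Min T)"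
  have finS: "finite S" and finT: "finite T" unfolding S_def T_def by auto
  have i_le: "i \<le> 2*l-1" unfolding i_def using finS by (auto simp: S_def)
  have s_ge: "1 \<le> s \<and> s \<le> 2*l"
  proof (cases "T = {}")
    case True then show ?thesis using l1 unfolding s_def by simp
  next
    case False
    then have "Min T \<in> T" using finT by simp
    then show ?thesis using False unfolding s_def T_def by auto
  qed
  have fi: "\<not> f k \<longleftrightarrow> k \<le> i" if "1 \<le> k" "k \<le> 2*l-1" for k
  proof
    assume "\<not> f k"
    then have "k \<in> S" using that unfolding S_def by auto
    then show "k \<le> i" unfolding i_def using finS by auto
  next
    assume "k \<le> i"
    then have "S \<noteq> {}" using that unfolding i_def by auto
    then have "Max S \<in> S" "i = Max S" using finS unfolding i_def by auto
    then have "\<not> f i" "i \<le> 2*l-1" unfolding S_def by auto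
    then show "\<not> f k" using fm[of k i] that \<open>k \<le> i\<close> by auto
  qed
  have gs: "\<not> g k \<longleftrightarrow> s \<le> k" if "1 \<le> k" "k \<le> 2*l-1" for k
  proof
    assume "\<not> g k"
    then have "k \<in> T" using that unfolding T_def by auto
    then show "s \<le> k" unfolding s_def using finT by auto
  next
    assume "s \<le> k"
    then have "T \<noteq> {}" using that unfolding s_def by auto
    then have "Min T \<in> T" "s = Min T" using finT unfolding s_def by auto
    then have "\<not> g s" "1 \<le> s" unfolding T_def by auto
    then show "\<not> g k" using gm[of k s] that \<open>s \<le> k\<close> by auto
  qed
  have is_lt: "i < s"
  proof (rule ccontr)
    assume "\<not> i < s"
    then have "1 \<le> i" "s \<le> i" using s_ge by auto
    then show False using fi[of i] gs[of i] F1[of i] i_le by auto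
  qed
  have up: "u_plus l P = gamma l ` {k\<in>{1..2*l-1}. f k \<and> \<not> g k}"
    unfolding u_plus_def nil_roots_def pos_ncpt_eq[OF l1] f_def g_def by auto
  have um: "u_minus l P = wneg ` gamma l ` {k\<in>{1..2*l-1}. g k \<and> \<not> f k}"
    unfolding u_minus_def nil_roots_def pos_ncpt_eq[OF l1] f_def g_def by auto
  have "{k\<in>{1..2*l-1}. f k \<and> \<not> g k} = {s..2*l-1}"
  proof (rule set_eqI)
    fix k show "k \<in> {k\<in>{1..2*l-1}. f k \<and> \<not> g k} \<longleftrightarrow> k \<in> {s..2*l-1}"
      using fi[of k] gs[of k] is_lt s_ge by auto
  qed
  then have up': "u_plus l P = Uset l s" unfolding up Uset_def by simp
  have "{k\<in>{1..2*l-1}. g k \<and> \<not> f k} = {1..i}"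
  proof (rule set_eqI)
    fix k show "k \<in> {k\<in>{1..2*l-1}. g k \<and> \<not> f k} \<longleftrightarrow> k \<in> {1..i}"
      using fi[of k] gs[of k] is_lt i_le F1[of k] by auto
  qed
  then have um': "u_minus l P = wneg ` Dset l i" unfolding um Dset_def by simp
  have cond: "(i \<le> l - 1 \<and> s \<in> {i+1..l} \<union> {2*l - i}) \<or>
              (l \<le> i \<and> i \<le> 2*l - 1 \<and> s \<in> {i+1..2*l})"
  proof (cases "l \<le> i")
    case True then show ?thesis using is_lt s_ge i_le by auto
  next
    case False
    show ?thesis
    proof (cases "s \<le> l")
      case True then show ?thesis using False is_lt by auto
    next
      case sl: False
      have fl: "f l" using fi[of l] False l1 by auto
      have gl: "g l" using gs[of l] sl l1 by auto
      have eq: "\<not> k \<le> i \<longleftrightarrow> \<not> s \<le> 2*l-k" if "1 \<le> k" "k \<le> l-1" for k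
        using F4[OF fl gl that] fi[of k] gs[of "2*l-k"] that by auto
      have "s \<le> 2*l-i"
      proof (cases "i = 0")
        case True then show ?thesis using s_ge by simp
      next
        case False
        then show ?thesis using eq[of i] \<open>\<not> l \<le> i\<close> by auto
      qed
      moreover have "2*l-i \<le> s"
      proof (rule ccontr)
        assume "\<not> 2*l-i \<le> s"
        then have h: "1 \<le> 2*l-s" "2*l-s \<le> l-1" using sl s_ge by arith+
        have "s \<le> 2*l - (2*l-s)" using s_ge by arith
        then have "2*l-s \<le> i" using eq[OF h] by blast
        then show False using \<open>\<not> 2*l-i \<le> s\<close> by arith
      qed
      ultimately show ?thesis using False by auto
    qed
  qed
  show ?thesis using up' um' cond by blast
qed



lemma gamma_inj:
  assumes "1 \<le> l"
  shows "inj_on (gamma l) {1..2*l-1}"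
proof
  fix a b assume a: "a \<in> {1..2*l-1}" and b: "b \<in> {1..2*l-1}" and e: "gamma l a = gamma l b"
  define lam :: wt where "lam = (\<lambda>x. if x = 1 then 0 else int l + 1 - int x)"
  have d: "dot l lam (gamma l k) = int k - int l" if "1 \<le> k" "k \<le> 2*l-1" for k
  proof -
    consider "k < l" | "k = l" | "l < k" by linarith
    then show ?thesis
    proof cases
      case 1 then show ?thesis unfolding dot_gamma[OF that] lam_def using that by simp
    next
      case 2 then show ?thesis unfolding dot_gamma[OF that] lam_def by simp
    next
      case 3 
      then have "2*l-k+1 \<noteq> 1" "int (2*l-k+1) = 2 * int l - int k + 1" using that by auto
      then show ?thesis unfolding dot_gamma[OF that] lam_def using 3 by simp
    qed
  qed
  have "dot l lam (gamma l a) = dot l lam (gamma l b)" using e by simp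
  then have "int a - int l = int b - int l" using d[of a] d[of b] a b by simp
  then show "a = b" by simp
qed

lemma card_D:
  assumes "1 \<le> l" "i \<le> 2*l-1"
  shows "card (wneg ` Dset l i) = i"
proof -
  have "inj_on wneg (Dset l i)" by (metis inj_on_def wneg_wneg)
  then have "card (wneg ` Dset l i) = card (Dset l i)" by (rule card_image)
  also have "\<dots> = card {1..i}" unfolding Dset_def
    by (rule card_image) (rule inj_on_subset[OF gamma_inj[OF assms(1)]], use assms in auto)
  finally show ?thesis by simp
qed

lemma card_U:
  assumes "1 \<le> l" "1 \<le> s"
  shows "card (Uset l s) = 2*l - s"
proof -
  have "card (Uset l s) = card {s..2*l-1}" unfolding Uset_def
    by (rule card_image) (rule inj_on_subset[OF gamma_inj[OF assms(1)]], use assms in auto)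
  then show ?thesis using assms by simp
qed

lemma gauss_aux: "2 * (\<Sum>i<n. n - i) = n * (n + 1::nat)"
proof (induction n)
  case 0 then show ?case by simp
next
  case (Suc n)
  have "(\<Sum>i<n. Suc n - i) = (\<Sum>i<n. (n - i) + 1)"
    by (rule sum.cong) auto
  also have "\<dots> = (\<Sum>i<n. n - i) + (\<Sum>i<n. (1::nat))" by (rule sum.distrib)
  also have "\<dots> = (\<Sum>i<n. n - i) + n" by simp
  finally have "(\<Sum>i<Suc n. Suc n - i) = (\<Sum>i<n. n - i) + n + 1" by simp
  then show ?case using Suc by simp
qed

lemma count_I:
  assumes "1 \<le> l"
  shows "card {(i, s). (i \<le> l - 1 \<and> s \<in> {i+1..l} \<union> {2*l - i}) \<or>
              (l \<le> i \<and> i \<le> 2*l - 1 \<and> s \<in> {i+1..2*l})} = l * (l + 2)"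
proof -
  define T where "T i = (if i < l then {i+1..l} \<union> {2*l - i} else {i+1..2*l})" for i
  have eq: "{(i, s). (i \<le> l - 1 \<and> s \<in> {i+1..l} \<union> {2*l - i}) \<or>
              (l \<le> i \<and> i \<le> 2*l - 1 \<and> s \<in> {i+1..2*l})} = Sigma {..<2*l} T"
    unfolding T_def using assms by (auto split: if_splits)
  have cT: "card (T i) = (if i < l then l - i + 1 else 2*l - i)" for i
  proof (cases "i < l")
    case True
    then have "2*l - i \<notin> {i+1..l}" by auto
    then show ?thesis using True unfolding T_def by simp
  next
    case False then show ?thesis unfolding T_def by simp
  qed
  have "card (Sigma {..<2*l} T) = (\<Sum>i<2*l. card (T i))"
    by (rule card_SigmaI) (auto simp: T_def)
  also have "\<dots> = (\<Sum>i<2*l. (if i < l then l - i + 1 else 2*l - i))" by (simp add: cT)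
  also have "\<dots> = (\<Sum>i<l. (if i < l then l - i + 1 else 2*l - i)) + (\<Sum>i=l..<2*l. (if i < l then l - i + 1 else 2*l - i))"
    unfolding lessThan_atLeast0 by (rule sum.atLeastLessThan_concat[symmetric]) auto
  also have "(\<Sum>i<l. (if i < l then l - i + 1 else 2*l - i)) = (\<Sum>i<l. l - i) + l"
  proof -
    have "(\<Sum>i<l. (if i < l then l - i + 1 else 2*l - i)) = (\<Sum>i<l. (l - i) + 1)"
      by (rule sum.cong) auto
    also have "\<dots> = (\<Sum>i<l. l - i) + (\<Sum>i<l. (1::nat))" by (rule sum.distrib)
    finally show ?thesis by simp
  qed
  also have "(\<Sum>i=l..<2*l. (if i < l then l - i + 1 else 2*l - i)) = (\<Sum>i=l..<2*l. 2*l - i)"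
    by (rule sum.cong) auto
  also have "\<dots> = (\<Sum>i=0..<l. 2*l - (l + i))" by (subst sum.atLeastLessThan_shift_0) (simp add: comp_def)
  also have "\<dots> = (\<Sum>i<l. l - i)" by (simp add: lessThan_atLeast0)
  finally have "card (Sigma {..<2*l} T) = 2 * (\<Sum>i<l. l - i) + l" by simp
  also have "\<dots> = l * (l + 2)" using gauss_aux[of l] by (simp add: algebra_simps)
  finally show ?thesis using eq by simp
qed


theorem mainTheorem2:
  fixes l :: nat
  assumes "1 \<le> l"
  shows "{(u_minus l P, u_plus l P) | P. theta_parabolic l P} =
           {(wneg ` Dset l i, Uset l s) | i s.
              (i \<le> l - 1 \<and> s \<in> {i+1..l} \<union> {2*l - i}) \<or>
              (l \<le> i \<and> i \<le> 2*l - 1 \<and> s \<in> {i+1..2*l})}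
         \<and> card {(u_minus l P, u_plus l P) | P. theta_parabolic l P} = l * (l + 2)"
proof -
  define I where "I = {(i, s). (i \<le> l - 1 \<and> s \<in> {i+1..l} \<union> {2*l - i}) \<or>
              (l \<le> i \<and> i \<le> 2*l - 1 \<and> s \<in> {i+1..2*l})}"
  define F where "F = (\<lambda>(i, s). (wneg ` Dset l i, Uset l s))"
  have R: "{(wneg ` Dset l i, Uset l s) | i s.
              (i \<le> l - 1 \<and> s \<in> {i+1..l} \<union> {2*l - i}) \<or>
              (l \<le> i \<and> i \<le> 2*l - 1 \<and> s \<in> {i+1..2*l})} = F ` I"
    unfolding F_def I_def by auto
  have E: "{(u_minus l P, u_plus l P) | P. theta_parabolic l P} =
           {(wneg ` Dset l i, Uset l s) | i s.
              (i \<le> l - 1 \<and> s \<in> {i+1..l} \<union> {2*l - i}) \<or>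
              (l \<le> i \<and> i \<le> 2*l - 1 \<and> s \<in> {i+1..2*l})}" (is "?L = ?R")
  proof
    show "?L \<subseteq> ?R" using necc[OF assms] by blast
    show "?R \<subseteq> ?L"
    proof
      fix x assume "x \<in> ?R"
      then obtain i s where x: "x = (wneg ` Dset l i, Uset l s)" and
        c: "(i \<le> l - 1 \<and> s \<in> {i+1..l} \<union> {2*l - i}) \<or>
              (l \<le> i \<and> i \<le> 2*l - 1 \<and> s \<in> {i+1..2*l})" by blast
      from c consider "i \<le> l-1" "i+1 \<le> s" "s \<le> l" | "i \<le> l-1" "s = 2*l-i"
        | "l \<le> i" "i+1 \<le> s" "s \<le> 2*l" by auto
      then show "x \<in> ?L"
      proof cases
        case 1 then show ?thesis using caseA1[OF assms] x by blast
      next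
        case 2 then show ?thesis using caseA2[OF assms] x by blast
      next
        case 3 then show ?thesis using caseB[OF assms] x by blast
      qed
    qed
  qed
  have inj: "inj_on F I"
  proof
    fix p q assume p: "p \<in> I" and q: "q \<in> I" and e: "F p = F q"
    obtain i s where ps: "p = (i, s)" by fastforce
    obtain i' s' where qs: "q = (i', s')" by fastforce
    have b: "i \<le> 2*l-1" "1 \<le> s" "i' \<le> 2*l-1" "1 \<le> s'" "s \<le> 2*l" "s' \<le> 2*l"
      using p q assms unfolding ps qs I_def by auto
    have "card (wneg ` Dset l i) = card (wneg ` Dset l i')" "card (Uset l s) = card (Uset l s')"
      using e unfolding ps qs F_def by auto
    then have "i = i'" "2*l - s = 2*l - s'"
      using card_D[OF assms b(1)] card_D[OF assms b(3)] card_U[OF assms b(2)] card_U[OF assms b(4)]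
      by auto
    then show "p = q" using b unfolding ps qs by auto
  qed
  have "card (F ` I) = card I" by (rule card_image[OF inj])
  also have "\<dots> = l * (l + 2)" unfolding I_def by (rule count_I[OF assms])
  finally show ?thesis using E R by simp
qed

end
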